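(* Let $\mathcal{X},\mathcal{Y}$ be disjoint finite sets of Boolean variables, $alive\notin\mathcal{X}\cup\mathcal{Y}$ a fresh variable, $\alpha$ a Boolean formula over $\mathcal{X}$, $\phi$ an LTLf formula over $\mathcal{X}\cup\mathcal{Y}$, and $\psi=t(\phi)\wedge alive\wedge(alive\ U\ (G\neg alive))$. Then $\phi$ is $\alpha$-fair realizable if and only if the LTL formula $GF\alpha\rightarrow\psi$ is realizable with respect to $\langle\mathcal{X},\mathcal{Y}\cup\{alive\}\rangle$.
   Context: LTLf formulas: $\phi ::= a \mid \neg\phi \mid \phi_1\wedge\phi_2 \mid X\phi \mid \phi_1 U\phi_2$ with the finite-trace semantics: $\rho,i\models X\phi$ iff $i+1<|\rho|$ and $\rho,i+1\models\phi$; $\rho,i\models\phi_1U\phi_2$ iff there is $j$ with $i\le j<|\rho|$, $\rho,j\models\phi_2$ and $\rho,k\models\phi_1$ for $i\le k<j$; atoms and Boolean connectives as usual; $\rho\models\phi$ iff $\rho,0\models\phi$. LTL: same syntax plus $F,G$, standard semantics over infinite traces. Translation $t$: $t(a)=a$; $t(\neg\phi_1)=\neg t(\phi_1)$; $t(\phi_1\wedge\phi_2)=t(\phi_1)\wedge t(\phi_2)$; $t(X\phi)=X(alive\wedge t(\phi))$; $t(\phi_1U\phi_2)=t(\phi_1)\,U\,(alive\wedge t(\phi_2))$. $\alpha$-fair realizability: $\phi$ is $\alpha$-fair realizable if there is $g:(2^{\mathcal{X}})^+\to 2^{\mathcal{Y}}$ such that for every $\lambda=X_0,X_1,\ldots\in(2^{\mathcal{X}})^\omega$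 with $X_j\models\alpha$ for infinitely many $j$, there is $k\ge0$ with $\phi$ true in $(X_0\cup g(X_0)),\ldots,(X_k\cup g(X_0,\ldots,X_k))$. LTL realizability: an LTL formula $\Psi$ over $\mathcal{X}\cup\mathcal{Y}'$ ($\mathcal{X},\mathcal{Y}'$ disjoint) is realizable with respect to $\langle\mathcal{X},\mathcal{Y}'\rangle$ if there is $f:(2^{\mathcal{X}})^+\to 2^{\mathcal{Y}'}$ such that for every $\lambda=X_0,X_1,\ldots\in(2^{\mathcal{X}})^\omega$, $\Psi$ holds on the infinite trace $(X_0\cup f(X_0)),(X_1\cup f(X_0,X_1)),(X_2\cup f(X_0,X_1,X_2)),\ldots$. *)

theory Defs
  imports Main
begin

datatype 'a bform = BTrue | BAtom 'a | BNot "'a bform" | BAnd "'a bform" "'a bform"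

fun bsat :: "'a set \<Rightarrow> 'a bform \<Rightarrow> bool" where
  "bsat s BTrue = True"
| "bsat s (BAtom a) = (a \<in> s)"
| "bsat s (BNot b) = (\<not> bsat s b)"
| "bsat s (BAnd b1 b2) = (bsat s b1 \<and> bsat s b2)"

fun batoms :: "'a bform \<Rightarrow> 'a set" where
  "batoms BTrue = {}"
| "batoms (BAtom a) = {a}"
| "batoms (BNot b) = batoms b"
| "batoms (BAnd b1 b2) = batoms b1 \<union> batoms b2"

datatype 'a ltlf = FAtom 'a | FNot "'a ltlf" | FAnd "'a ltlf" "'a ltlf"
  | FNext "'a ltlf" | FUntil "'a ltlf" "'a ltlf"

fun ltlf_sat :: "'a set list \<Rightarrow> nat \<Rightarrow> 'a ltlf \<Rightarrow> bool" where
  "ltlf_sat \<rho> i (FAtom a) = (a \<in> \<rho> ! i)"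
| "ltlf_sat \<rho> i (FNot p) = (\<not> ltlf_sat \<rho> i p)"
| "ltlf_sat \<rho> i (FAnd p q) = (ltlf_sat \<rho> i p \<and> ltlf_sat \<rho> i q)"
| "ltlf_sat \<rho> i (FNext p) = (i + 1 < length \<rho> \<and> ltlf_sat \<rho> (i + 1) p)"
| "ltlf_sat \<rho> i (FUntil p q) =
     (\<exists>j. i \<le> j \<and> j < length \<rho> \<and> ltlf_sat \<rho> j q \<and> (\<forall>k. i \<le> k \<and> k < j \<longrightarrow> ltlf_sat \<rho> k p))"

definition ltlf_models :: "'a set list \<Rightarrow> 'a ltlf \<Rightarrow> bool" where
  "ltlf_models \<rho> p = ltlf_sat \<rho> 0 p"

fun fatoms :: "'a ltlf \<Rightarrow> 'a set" where
  "fatoms (FAtom a) = {a}"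
| "fatoms (FNot p) = fatoms p"
| "fatoms (FAnd p q) = fatoms p \<union> fatoms q"
| "fatoms (FNext p) = fatoms p"
| "fatoms (FUntil p q) = fatoms p \<union> fatoms q"

datatype 'a ltl = LTrue | LAtom 'a | LNot "'a ltl" | LAnd "'a ltl" "'a ltl"
  | LNext "'a ltl" | LUntil "'a ltl" "'a ltl" | LF "'a ltl" | LG "'a ltl"

fun ltl_sat :: "(nat \<Rightarrow> 'a set) \<Rightarrow> nat \<Rightarrow> 'a ltl \<Rightarrow> bool" where
  "ltl_sat w i LTrue = True"
| "ltl_sat w i (LAtom a) = (a \<in> w i)"
| "ltl_sat w i (LNot p) = (\<not> ltl_sat w i p)"
| "ltl_sat w i (LAnd p q) = (ltl_sat w i p \<and> ltl_sat w i q)"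
| "ltl_sat w i (LNext p) = ltl_sat w (i + 1) p"
| "ltl_sat w i (LUntil p q) =
     (\<exists>j. i \<le> j \<and> ltl_sat w j q \<and> (\<forall>k. i \<le> k \<and> k < j \<longrightarrow> ltl_sat w k p))"
| "ltl_sat w i (LF p) = (\<exists>j. i \<le> j \<and> ltl_sat w j p)"
| "ltl_sat w i (LG p) = (\<forall>j. i \<le> j \<longrightarrow> ltl_sat w j p)"

definition ltl_models :: "(nat \<Rightarrow> 'a set) \<Rightarrow> 'a ltl \<Rightarrow> bool" where
  "ltl_models w p = ltl_sat w 0 p"

definition LImp :: "'a ltl \<Rightarrow> 'a ltl \<Rightarrow> 'a ltl" where
  "LImp p q = LNot (LAnd p (LNot q))"

fun bform_to_ltl :: "'a bform \<Rightarrow> 'a ltl" where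
  "bform_to_ltl BTrue = LTrue"
| "bform_to_ltl (BAtom a) = LAtom a"
| "bform_to_ltl (BNot b) = LNot (bform_to_ltl b)"
| "bform_to_ltl (BAnd b1 b2) = LAnd (bform_to_ltl b1) (bform_to_ltl b2)"

fun transl :: "'a \<Rightarrow> 'a ltlf \<Rightarrow> 'a ltl" where
  "transl alive (FAtom a) = LAtom a"
| "transl alive (FNot p) = LNot (transl alive p)"
| "transl alive (FAnd p q) = LAnd (transl alive p) (transl alive q)"
| "transl alive (FNext p) = LNext (LAnd (LAtom alive) (transl alive p))"
| "transl alive (FUntil p q) = LUntil (transl alive p) (LAnd (LAtom alive) (transl alive q))"

definition psi :: "'a \<Rightarrow> 'a ltlf \<Rightarrow> 'a ltl" where
  "psi alive \<phi> = LAnd (transl alive \<phi>)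
      (LAnd (LAtom alive) (LUntil (LAtom alive) (LG (LNot (LAtom alive)))))"

text \<open>Strategies map nonempty input histories (lists X_0,...,X_k) to output letters.\<close>

definition alpha_fair_realizable ::
  "'a set \<Rightarrow> 'a set \<Rightarrow> 'a bform \<Rightarrow> 'a ltlf \<Rightarrow> bool" where
  "alpha_fair_realizable X Y \<alpha> \<phi> =
    (\<exists>g :: 'a set list \<Rightarrow> 'a set. (\<forall>h. g h \<subseteq> Y) \<and>
       (\<forall>lam :: nat \<Rightarrow> 'a set. (\<forall>j. lam j \<subseteq> X) \<longrightarrow> infinite {j. bsat (lam j) \<alpha>} \<longrightarrow>
          (\<exists>k. ltlf_models (map (\<lambda>j. lam j \<union> g (map lam [0..<Suc j])) [0..<Suc k]) \<phi>)))"

definition ltl_realizable :: "'a set \<Rightarrow> 'a set \<Rightarrow> 'a ltl \<Rightarrow> bool" where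
  "ltl_realizable X Y' \<Psi> =
    (\<exists>f :: 'a set list \<Rightarrow> 'a set. (\<forall>h. f h \<subseteq> Y') \<and>
       (\<forall>lam :: nat \<Rightarrow> 'a set. (\<forall>j. lam j \<subseteq> X) \<longrightarrow>
          ltl_models (\<lambda>j. lam j \<union> f (map lam [0..<Suc j])) \<Psi>))"

end

theory Submission
  imports Defs "HOL-Library.Infinite_Set"
begin

lemma transl_eq:
  assumes "length \<rho> = n"
    and "\<And>i a. i < n \<Longrightarrow> a \<in> fatoms \<phi> \<Longrightarrow> (a \<in> \<rho>!i \<longleftrightarrow> a \<in> w i)"
    and "\<And>i. alive \<in> w i \<longleftrightarrow> i < n"
    and "i < n"
  shows "ltl_sat w i (transl alive \<phi>) \<longleftrightarrow> ltlf_sat \<rho> i \<phi>"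
  using assms(2,4)
proof (induction \<phi> arbitrary: i)
  case (FUntil p q)
  have ihp: "\<And>k. k < n \<Longrightarrow> ltl_sat w k (transl alive p) = ltlf_sat \<rho> k p"
    using FUntil by simp
  have ihq: "\<And>k. k < n \<Longrightarrow> ltl_sat w k (transl alive q) = ltlf_sat \<rho> k q"
    using FUntil by simp
  show ?case
  proof
    assume "ltl_sat w i (transl alive (FUntil p q))"
    then obtain j where "i \<le> j" "alive \<in> w j" "ltl_sat w j (transl alive q)"
      "\<forall>k. i \<le> k \<and> k < j \<longrightarrow> ltl_sat w k (transl alive p)" by auto
    then show "ltlf_sat \<rho> i (FUntil p q)" using assms(1,3) ihp ihq
      by (auto intro!: exI[of _ j])
  next
    assume "ltlf_sat \<rho> i (FUntil p q)"
    then obtain j where "i \<le> j" "j < n" "ltlf_sat \<rho> j q"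
      "\<forall>k. i \<le> k \<and> k < j \<longrightarrow> ltlf_sat \<rho> k p" using assms(1) by auto
    then show "ltl_sat w i (transl alive (FUntil p q))" using assms(1,3) ihp ihq
      by (auto intro!: exI[of _ j])
  qed
qed (use assms in auto)

lemma bform_eq:
  assumes "\<And>a. a \<in> batoms b \<Longrightarrow> (a \<in> w j \<longleftrightarrow> a \<in> T)"
  shows "ltl_sat w j (bform_to_ltl b) \<longleftrightarrow> bsat T b"
  using assms by (induction b) auto

theorem mainTheorem8:
  fixes X Y :: "'a set" and alive :: 'a and \<alpha> :: "'a bform" and \<phi> :: "'a ltlf"
  assumes "finite X" and "finite Y" and "X \<inter> Y = {}"
    and "alive \<notin> X \<union> Y"
    and "batoms \<alpha> \<subseteq> X"
    and "fatoms \<phi> \<subseteq> X \<union> Y"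
  shows "alpha_fair_realizable X Y \<alpha> \<phi> \<longleftrightarrow>
         ltl_realizable X (Y \<union> {alive})
           (LImp (LG (LF (bform_to_ltl \<alpha>))) (psi alive \<phi>))"
proof
  assume "alpha_fair_realizable X Y \<alpha> \<phi>"
  then obtain g where gY: "\<forall>h. g h \<subseteq> Y" and gw: "\<forall>lam :: nat \<Rightarrow> 'a set. (\<forall>j. lam j \<subseteq> X) \<longrightarrow> infinite {j. bsat (lam j) \<alpha>} \<longrightarrow>
          (\<exists>k. ltlf_models (map (\<lambda>j. lam j \<union> g (map lam [0..<Suc j])) [0..<Suc k]) \<phi>)"
    unfolding alpha_fair_realizable_def by blast
  define P where "P h k = ltlf_models (map (\<lambda>j. h!j \<union> g (take (Suc j) h)) [0..<Suc k]) \<phi>" for h k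
  define f where "f h = g h \<union> (if \<exists>k'. Suc k' < length h \<and> P h k' then {} else {alive})" for h
  show "ltl_realizable X (Y \<union> {alive}) (LImp (LG (LF (bform_to_ltl \<alpha>))) (psi alive \<phi>))"
    unfolding ltl_realizable_def
  proof (intro exI[of _ f] conjI allI impI)
    show "f h \<subseteq> Y \<union> {alive}" for h using gY unfolding f_def by auto
  next
    fix lam :: "nat \<Rightarrow> 'a set"
    assume lX: "\<forall>j. lam j \<subseteq> X"
    define w where "w j = lam j \<union> f (map lam [0..<Suc j])" for j
    define Q where "Q k = ltlf_models (map (\<lambda>i. lam i \<union> g (map lam [0..<Suc i])) [0..<Suc k]) \<phi>" for k
    have PQ: "P (map lam [0..<Suc j]) k' = Q k'" if "k' < j" for j k'
    proof -
      have "map (\<lambda>i. (map lam [0..<Suc j])!i \<union> g (take (Suc i) (map lam [0..<Suc j]))) [0..<Suc k']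
          = map (\<lambda>i. lam i \<union> g (map lam [0..<Suc i])) [0..<Suc k']"
        using that by (auto simp: take_map nth_append take_upt simp del: upt_Suc)
      then show ?thesis unfolding P_def Q_def by (simp only:)
    qed
    have galive: "alive \<notin> lam j \<union> g h" for j h using lX gY assms(4) by blast
    have alive_w: "alive \<in> w j \<longleftrightarrow> \<not>(\<exists>k'<j. Q k')" for j
      using galive[of j "map lam [0..<Suc j]"] PQ[of _ j]
      unfolding w_def f_def by (auto simp del: upt_Suc)
    show "ltl_models w (LImp (LG (LF (bform_to_ltl \<alpha>))) (psi alive \<phi>))"
      unfolding ltl_models_def LImp_def
    proof (simp only: ltl_sat.simps(3,4), intro notI, elim conjE)
      assume GF: "ltl_sat w 0 (LG (LF (bform_to_ltl \<alpha>)))" and npsi: "\<not> ltl_sat w 0 (psi alive \<phi>)"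
      have bs: "ltl_sat w j (bform_to_ltl \<alpha>) \<longleftrightarrow> bsat (lam j) \<alpha>" for j
      proof (rule bform_eq)
        fix a assume "a \<in> batoms \<alpha>"
        then have "a \<in> X" using assms(5) by blast
        then have "a \<notin> f (map lam [0..<Suc j])" using gY assms(3,4) unfolding f_def by auto
        then show "a \<in> w j \<longleftrightarrow> a \<in> lam j" unfolding w_def by auto
      qed
      have "infinite {j. bsat (lam j) \<alpha>}"
        using GF bs unfolding infinite_nat_iff_unbounded_le by auto
      then obtain k where "Q k" using gw lX unfolding Q_def by blast
      define k0 where "k0 = (LEAST k. Q k)"
      have Qk0: "Q k0" unfolding k0_def by (rule LeastI[of Q k]) fact
      have nQ: "k' < k0 \<Longrightarrow> \<not> Q k'" for k' unfolding k0_def by (rule not_less_Least)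
      have aw: "alive \<in> w j \<longleftrightarrow> j < Suc k0" for j
      proof
        assume "alive \<in> w j"
        then have "\<not> (k0 < j)" using alive_w[of j] Qk0 by blast
        then show "j < Suc k0" by simp
      next
        assume "j < Suc k0"
        then have "\<not>(\<exists>k'<j. Q k')" using nQ by auto
        then show "alive \<in> w j" using alive_w[of j] by blast
      qed
      define \<rho> where "\<rho> = map (\<lambda>i. lam i \<union> g (map lam [0..<Suc i])) [0..<Suc k0]"
      have tr: "ltl_sat w 0 (transl alive \<phi>) \<longleftrightarrow> ltlf_sat \<rho> 0 \<phi>"
      proof (rule transl_eq[where n = "Suc k0"])
        show "length \<rho> = Suc k0" unfolding \<rho>_def by simp
        show "alive \<in> w i \<longleftrightarrow> i < Suc k0" for i by (rule aw)
        show "0 < Suc k0" by simp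
        fix i a assume "i < Suc k0" "a \<in> fatoms \<phi>"
        then have "a \<noteq> alive" using assms(4,6) by blast
        then show "a \<in> \<rho>!i \<longleftrightarrow> a \<in> w i" using \<open>i < Suc k0\<close>
          unfolding \<rho>_def w_def f_def by (auto simp del: upt_Suc)
      qed
      have t0: "ltl_sat w 0 (transl alive \<phi>)"
        using tr Qk0 unfolding Q_def \<rho>_def ltlf_models_def by blast
      have a0: "alive \<in> w 0" using aw by blast
      have u: "ltl_sat w 0 (LUntil (LAtom alive) (LG (LNot (LAtom alive))))"
        unfolding ltl_sat.simps
        by (rule exI[of _ "Suc k0"]) (use aw in auto)
      have "ltl_sat w 0 (psi alive \<phi>)"
        unfolding psi_def using t0 a0 u by simp
      with npsi show False by blast
    qed
  qed
next
  assume "ltl_realizable X (Y \<union> {alive}) (LImp (LG (LF (bform_to_ltl \<alpha>))) (psi alive \<phi>))"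
  then obtain f where fY: "\<forall>h. f h \<subseteq> Y \<union> {alive}" and fw: "\<forall>lam :: nat \<Rightarrow> 'a set. (\<forall>j. lam j \<subseteq> X) \<longrightarrow>
          ltl_models (\<lambda>j. lam j \<union> f (map lam [0..<Suc j])) (LImp (LG (LF (bform_to_ltl \<alpha>))) (psi alive \<phi>))"
    unfolding ltl_realizable_def by blast
  define g where "g h = f h - {alive}" for h
  show "alpha_fair_realizable X Y \<alpha> \<phi>"
    unfolding alpha_fair_realizable_def
  proof (intro exI[of _ g] conjI allI impI)
    show "g h \<subseteq> Y" for h using fY unfolding g_def by auto
  next
    fix lam :: "nat \<Rightarrow> 'a set"
    assume lX: "\<forall>j. lam j \<subseteq> X" and fair: "infinite {j. bsat (lam j) \<alpha>}"
    define w where "w j = lam j \<union> f (map lam [0..<Suc j])" for j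
    have m: "ltl_models w (LImp (LG (LF (bform_to_ltl \<alpha>))) (psi alive \<phi>))"
      using fw lX unfolding w_def by blast
    have bs: "ltl_sat w j (bform_to_ltl \<alpha>) \<longleftrightarrow> bsat (lam j) \<alpha>" for j
    proof (rule bform_eq)
      fix a assume "a \<in> batoms \<alpha>"
      then have "a \<in> X" using assms(5) by blast
      then have "a \<notin> f (map lam [0..<Suc j])" using fY assms(3,4) by blast
      then show "a \<in> w j \<longleftrightarrow> a \<in> lam j" unfolding w_def by auto
    qed
    have GF: "ltl_sat w 0 (LG (LF (bform_to_ltl \<alpha>)))"
      using fair bs unfolding infinite_nat_iff_unbounded_le by auto
    have ps: "ltl_sat w 0 (psi alive \<phi>)"
    proof -
      have "\<not> (ltl_sat w 0 (LG (LF (bform_to_ltl \<alpha>))) \<and> \<not> ltl_sat w 0 (psi alive \<phi>))"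
        using m unfolding ltl_models_def LImp_def by (metis ltl_sat.simps(3,4))
      then show ?thesis using GF by blast
    qed
    then have t0: "ltl_sat w 0 (transl alive \<phi>)" and a0: "alive \<in> w 0"
      and "\<exists>j. (\<forall>j'. j \<le> j' \<longrightarrow> alive \<notin> w j') \<and> (\<forall>k<j. alive \<in> w k)"
      unfolding psi_def by auto
    then obtain j where j1: "\<forall>j'. j \<le> j' \<longrightarrow> alive \<notin> w j'" and j2: "\<forall>k<j. alive \<in> w k" by blast
    have "j \<noteq> 0" using a0 j1 by auto
    then obtain k where jk: "j = Suc k" by (cases j) auto
    have aw: "alive \<in> w i \<longleftrightarrow> i < Suc k" for i
      using j1[rule_format, of i] j2[rule_format, of i] jk by (cases "i < j") auto
    define \<rho> where "\<rho> = map (\<lambda>i. lam i \<union> g (map lam [0..<Suc i])) [0..<Suc k]"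
    have tr: "ltl_sat w 0 (transl alive \<phi>) \<longleftrightarrow> ltlf_sat \<rho> 0 \<phi>"
    proof (rule transl_eq[where n = "Suc k"])
      show "length \<rho> = Suc k" unfolding \<rho>_def by simp
      show "alive \<in> w i \<longleftrightarrow> i < Suc k" for i by (rule aw)
      show "0 < Suc k" by simp
      fix i a assume "i < Suc k" "a \<in> fatoms \<phi>"
      then have "a \<noteq> alive" using assms(4,6) by blast
      then show "a \<in> \<rho>!i \<longleftrightarrow> a \<in> w i" using \<open>i < Suc k\<close>
        unfolding \<rho>_def w_def g_def by (auto simp del: upt_Suc)
    qed
    show "\<exists>k. ltlf_models (map (\<lambda>j. lam j \<union> g (map lam [0..<Suc j])) [0..<Suc k]) \<phi>"
      using tr t0 unfolding ltlf_models_def \<rho>_def by blast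
  qed
qed

end
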